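(* Let $\{\Omega_n\}_{n\ge1}$ be open convex subdomains of $\Omega$ such that for every $\delta>0$ there is $N(\delta)$ with $\overline{\Omega_\delta}\subset\Omega_n\subset\Omega$ for all $n\ge N(\delta)$, and let $v_n\in W^+(\Omega_n)$. Assume: (i) there is $v_0\in W^+(\Omega)$ with $\lim_{n\to\infty}v_n(\boldsymbol{x})=v_0(\boldsymbol{x})$ for every $\boldsymbol{x}\in\Omega$; (ii) for each $n$, the border $b_n$ of $v_n$ (a function on $\partial\Omega_n$, $b_n(\boldsymbol{y})=\liminf_{\Omega_n\ni\boldsymbol{x}\to\boldsymbol{y}}v_n(\boldsymbol{x})$) is real-valued and continuous on $\partial\Omega_n$; (iii) there is $\tilde b\in C^0(\partial\Omega)$ such that the graphs $\boldsymbol{S}_n=\{(\boldsymbol{x},b_n(\boldsymbol{x})):\boldsymbol{x}\in\partial\Omega_n\}$ have topological limit $\lim^T_{n\to\infty}\boldsymbol{S}_n=\tilde{\boldsymbol{S}}$, where $\tilde{\boldsymbol{S}}=\{(\boldsymbol{x},\tilde b(\boldsymbol{x})):\boldsymbol{x}\in\partial\Omega\}$. Let $b_0$ be the border of $v_0$, $b_0(\boldsymbol{x})=\liminf_{\Omega\ni\boldsymbol{x}'\to\boldsymbol{x}}v_0(\boldsymbol{x}')$. Then $b_0(\boldsymbol{x})\le\tilde b(\boldsymbol{x})$ for all $\boldsymbol{x}\in\partial\Omega$.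
   Context: $\Omega\subset\mathbb{R}^d$ is a bounded open convex domain; for an open convex set $U$, $W^+(U)$ denotes the set of convex real-valued functions on $U$. For $\delta>0$, $\Omega_\delta=\{\boldsymbol{x}\in\Omega:\operatorname{dist}(\boldsymbol{x},\partial\Omega)>\delta\}$. Topological limits: for sets $E_n\subset\mathbb{R}^m$, the superior topological limit $\overline{\lim}^T E_n$ is the set of $\boldsymbol{x}$ such that there exist a subsequence $n_k$ and $\boldsymbol{x}_{n_k}\in E_{n_k}$ with $\boldsymbol{x}_{n_k}\to\boldsymbol{x}$; the inferior topological limit $\underline{\lim}^T E_n$ is the set of $\boldsymbol{x}$ such that there exist $\boldsymbol{x}_n\in E_n$ (for all large $n$) with $\boldsymbol{x}_n\to\boldsymbol{x}$; if these coincide, the common set is the topological limit $\lim^T E_n$. *)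

theory Defs
  imports "HOL-Analysis.Analysis"
begin

text \<open>W^+(U): convex real-valued functions on the open convex set U.
  (Functions are total in HOL; only their values on U matter.)\<close>
definition Wplus :: "'a::euclidean_space set \<Rightarrow> ('a \<Rightarrow> real) set" where
  "Wplus U = {v. convex_on U v}"

definition inner_dom :: "'a::euclidean_space set \<Rightarrow> real \<Rightarrow> 'a set" where
  "inner_dom \<Omega> \<delta> = {x \<in> \<Omega>. infdist x (frontier \<Omega>) > \<delta>}"

definition border :: "('a::euclidean_space \<Rightarrow> real) \<Rightarrow> 'a set \<Rightarrow> 'a \<Rightarrow> ereal" where
  "border v U y = Liminf (at y within U) (\<lambda>x. ereal (v x))"

definition upper_top_lim :: "(nat \<Rightarrow> 'b::metric_space set) \<Rightarrow> 'b set" where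
  "upper_top_lim E = {x. \<exists>r xs. strict_mono r \<and> (\<forall>k. xs k \<in> E (r k)) \<and> xs \<longlonglongrightarrow> x}"

definition lower_top_lim :: "(nat \<Rightarrow> 'b::metric_space set) \<Rightarrow> 'b set" where
  "lower_top_lim E = {x. \<exists>xs. (\<forall>\<^sub>F n in sequentially. xs n \<in> E n) \<and> xs \<longlonglongrightarrow> x}"

definition has_top_limit :: "(nat \<Rightarrow> 'b::metric_space set) \<Rightarrow> 'b set \<Rightarrow> bool" where
  "has_top_limit E S \<longleftrightarrow> upper_top_lim E = S \<and> lower_top_lim E = S"

end

theory Submission
  imports Defs
begin

lemma cube_hull:
  fixes x :: "'a::euclidean_space"
  assumes "e > 0"
  obtains c d where "finite c" "convex hull c \<subseteq> cball x e" "d > 0" "cball x d \<subseteq> convex hull c"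
proof -
  note dimge1 = DIM_positive[where 'a='a]
  define d where "d = e / real DIM('a)"
  have "0 < d"
    unfolding d_def using \<open>e > 0\<close> dimge1 by auto
  define c where "c = (\<Sum>i\<in>Basis. (\<lambda>a. a *\<^sub>R i) ` {x\<bullet>i - d, x\<bullet>i + d})"
  have fc: "finite c"
    unfolding c_def by (simp add: finite_set_sum)
  have "\<And>i. i \<in> Basis \<Longrightarrow> convex hull {x \<bullet> i - d, x \<bullet> i + d} = cbox (x \<bullet> i - d) (x \<bullet> i + d)"
    using \<open>0 < d\<close> convex_hull_eq_real_cbox by auto
  then have 1: "convex hull c = {a. \<forall>i\<in>Basis. a \<bullet> i \<in> cbox (x \<bullet> i - d) (x \<bullet> i + d)}"
    unfolding box_eq_set_sum_Basis c_def convex_hull_set_sum 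
    apply (subst convex_hull_linear_image [symmetric])
    by (force simp add: linear_iff scaleR_add_left)+
  then have 2: "convex hull c = {a. \<forall>i\<in>Basis. a \<bullet> i \<in> cball (x \<bullet> i) d}"
    by (simp add: dist_norm abs_le_iff algebra_simps)
  have c2: "cball x d \<subseteq> convex hull c"
    unfolding 2
    by (clarsimp simp: dist_norm) (metis inner_commute inner_diff_right norm_bound_Basis_le)
  have e': "e = (\<Sum>(i::'a)\<in>Basis. d)"
    by (simp add: d_def)
  have c1: "convex hull c \<subseteq> cball x e"
    unfolding 2
  proof clarsimp
    show "dist x y \<le> e" if "\<forall>i\<in>Basis. dist (x \<bullet> i) (y \<bullet> i) \<le> d" for y
    proof -
      have "(\<Sum>i\<in>Basis. dist (x \<bullet> i) (y \<bullet> i)) \<le> e"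
        using e' sum_mono that by fastforce
      then show ?thesis
        by (metis (mono_tags) euclidean_dist_l2 order_trans [OF L2_set_le_sum] zero_le_dist)
    qed
  qed
  show ?thesis using that[OF fc c1 \<open>0<d\<close> c2] .
qed

lemma approx_border:
  fixes f :: "'a::euclidean_space \<Rightarrow> real"
  assumes "open U" "y \<in> frontier U" "\<bar>border f U y\<bar> \<noteq> \<infinity>" "\<rho> > 0" "\<epsilon> > 0"
  shows "\<exists>q\<in>U. dist q y < \<rho> \<and> f q < real_of_ereal (border f U y) + \<epsilon>"
proof (rule ccontr)
  assume H: "\<not> ?thesis"
  define \<beta> where "\<beta> = real_of_ereal (border f U y)"
  have B: "border f U y = ereal \<beta>" using assms(3) unfolding \<beta>_def by (cases "border f U y") auto
  have "eventually (\<lambda>q. ereal (\<beta> + \<epsilon>) \<le> ereal (f q)) (at y within U)"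
    unfolding eventually_at using H assms(4) \<beta>_def by (auto intro!: exI[of _ \<rho>] simp: not_less)
  hence "ereal (\<beta> + \<epsilon>) \<le> border f U y" unfolding border_def by (rule Liminf_bounded)
  thus False using B assms(5) by simp
qed

lemma liminf_upper:
  fixes f :: "'a::euclidean_space \<Rightarrow> real"
  assumes "\<And>r. r > 0 \<Longrightarrow> \<exists>p\<in>U. p \<noteq> x \<and> dist p x < r \<and> f p \<le> C"
  shows "border f U x \<le> ereal C"
  unfolding border_def
proof (rule Liminf_least)
  fix P assume "eventually P (at x within U)"
  then obtain r where r: "r > 0" "\<And>p. p \<in> U \<Longrightarrow> 0 < dist p x \<Longrightarrow> dist p x < r \<Longrightarrow> P p"
    unfolding eventually_at by auto
  obtain p where p: "p \<in> U" "p \<noteq> x" "dist p x < r" "f p \<le> C" using assms[OF r(1)] by auto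
  have "P p" using r(2)[OF p(1) _ p(3)] p(2) by simp
  hence "(INF q\<in>Collect P. ereal (f q)) \<le> ereal (f p)" by (intro INF_lower) auto
  also have "\<dots> \<le> ereal C" using p by simp
  finally show "(INF q\<in>Collect P. ereal (f q)) \<le> ereal C" .
qed

theorem mainTheorem8:
  fixes \<Omega> :: "'a::euclidean_space set"
    and \<Omega>n :: "nat \<Rightarrow> 'a set"
    and v :: "nat \<Rightarrow> 'a \<Rightarrow> real"
    and v0 :: "'a \<Rightarrow> real"
    and bt :: "'a \<Rightarrow> real"
  assumes \<Omega>: "bounded \<Omega>" "open \<Omega>" "convex \<Omega>"
    and \<Omega>n: "\<And>n. open (\<Omega>n n) \<and> convex (\<Omega>n n) \<and> \<Omega>n n \<subseteq> \<Omega>"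
    and exh: "\<And>\<delta>. \<delta> > 0 \<Longrightarrow> \<exists>N. \<forall>n\<ge>N. closure (inner_dom \<Omega> \<delta>) \<subseteq> \<Omega>n n \<and> \<Omega>n n \<subseteq> \<Omega>"
    and vW: "\<And>n. v n \<in> Wplus (\<Omega>n n)"
    and v0W: "v0 \<in> Wplus \<Omega>"
    and conv: "\<And>x. x \<in> \<Omega> \<Longrightarrow> (\<lambda>n. v n x) \<longlonglongrightarrow> v0 x"
    and bfin: "\<And>n y. y \<in> frontier (\<Omega>n n) \<Longrightarrow> \<bar>border (v n) (\<Omega>n n) y\<bar> \<noteq> \<infinity>"
    and bcont: "\<And>n. continuous_on (frontier (\<Omega>n n)) (\<lambda>y. real_of_ereal (border (v n) (\<Omega>n n) y))"
    and btc: "continuous_on (frontier \<Omega>) bt"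
    and lim: "has_top_limit
               (\<lambda>n. {(x, real_of_ereal (border (v n) (\<Omega>n n) x)) | x. x \<in> frontier (\<Omega>n n)})
               {(x, bt x) | x. x \<in> frontier \<Omega>}"
  shows "\<forall>x \<in> frontier \<Omega>. border v0 \<Omega> x \<le> ereal (bt x)"
proof
  fix x assume xF: "x \<in> frontier \<Omega>"
  have xnot: "x \<notin> \<Omega>" using xF \<Omega>(2) by (simp add: frontier_def interior_open)
  have xcl: "x \<in> closure \<Omega>" using xF by (simp add: frontier_def)
  then have "\<Omega> \<noteq> {}" by auto
  then obtain z where z: "z \<in> \<Omega>" by auto
  have zx: "z \<noteq> x" using z xnot by auto
  obtain e0 where e0: "e0 > 0" "cball z e0 \<subseteq> \<Omega>" using \<Omega>(2) z open_contains_cball by blast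
  define e where "e = e0 / 2"
  have e: "e > 0" using e0 by (simp add: e_def)
  have sub1: "cball z e \<subseteq> inner_dom \<Omega> (e/2)"
  proof
    fix p assume p: "p \<in> cball z e"
    have "p \<in> \<Omega>" using p e0 e_def by auto
    moreover have "e \<le> infdist p (frontier \<Omega>)"
    proof -
      have ne: "frontier \<Omega> \<noteq> {}" using xF by auto
      have "e \<le> dist p a" if a: "a \<in> frontier \<Omega>" for a
      proof -
        have "a \<notin> \<Omega>" using a \<Omega>(2) by (simp add: frontier_def interior_open)
        hence "a \<notin> cball z e0" using e0 by auto
        hence "dist z a > e0" by simp
        moreover have "dist z a \<le> dist z p + dist p a" by (rule dist_triangle)
        ultimately show ?thesis using p e_def by simp
      qed
      thus ?thesis unfolding infdist_notempty[OF ne] using ne by (intro cINF_greatest) auto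
    qed
    ultimately show "p \<in> inner_dom \<Omega> (e/2)" unfolding inner_dom_def using e by auto
  qed
  obtain N1 where N1: "\<And>n. n \<ge> N1 \<Longrightarrow> cball z e \<subseteq> \<Omega>n n"
    using exh[of "e/2"] e sub1 closure_subset by (metis half_gt_zero order_trans)
  obtain c d where c: "finite c" "convex hull c \<subseteq> cball z e" "d > 0" "cball z d \<subseteq> convex hull c"
    using cube_hull[OF e] by metis
  have cO: "c \<subseteq> \<Omega>"
  proof -
    have "cball z e \<subseteq> cball z e0" using e e_def by (intro subset_cball) simp
    thus ?thesis using c(2) hull_subset[of c convex] e0 by blast
  qed
  have cne: "c \<noteq> {}" using c(3,4) by auto
  define M where "M = Max (v0 ` c)"
  have vM: "v0 w \<le> M" if "w \<in> c" for w unfolding M_def using c(1) that by auto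
  define S where "S = (\<lambda>n. {(x, real_of_ereal (border (v n) (\<Omega>n n) x)) | x. x \<in> frontier (\<Omega>n n)})"
  have "(x, bt x) \<in> lower_top_lim S" using lim xF unfolding has_top_limit_def S_def by auto
  then obtain xs where xs: "eventually (\<lambda>n. xs n \<in> S n) sequentially" "xs \<longlonglongrightarrow> (x, bt x)"
    unfolding lower_top_lim_def by auto
  define y where "y = (\<lambda>n. fst (xs n))"
  define \<beta> where "\<beta> = (\<lambda>n. snd (xs n))"
  have yl: "y \<longlonglongrightarrow> x" unfolding y_def using tendsto_fst[OF xs(2)] by simp
  have \<beta>l: "\<beta> \<longlonglongrightarrow> bt x" unfolding \<beta>_def using tendsto_snd[OF xs(2)] by simp
  have ev_y: "eventually (\<lambda>n. y n \<in> frontier (\<Omega>n n) \<and> \<beta> n = real_of_ereal (border (v n) (\<Omega>n n) (y n))) sequentially"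
    using xs(1) by eventually_elim (auto simp: S_def y_def \<beta>_def)
  show "border v0 \<Omega> x \<le> ereal (bt x)"
  proof (rule ereal_le_epsilon2)
    fix e' :: real assume e': "e' > 0"
    define \<epsilon> where "\<epsilon> = e' / 2"
    have \<epsilon>: "\<epsilon> > 0" using e' by (simp add: \<epsilon>_def)
    have evc: "eventually (\<lambda>n. \<forall>w\<in>c. v n w < M + \<epsilon>) sequentially"
    proof (rule eventually_ball_finite[OF c(1)], rule ballI)
      fix w assume "w \<in> c"
      hence "(\<lambda>n. v n w) \<longlonglongrightarrow> v0 w" "v0 w < M + \<epsilon>" using conv cO vM \<epsilon> by force+
      thus "eventually (\<lambda>n. v n w < M + \<epsilon>) sequentially" using order_tendstoD(2) by blast
    qed
    have evh: "eventually (\<lambda>n. convex hull c \<subseteq> \<Omega>n n \<and> (\<forall>w\<in>convex hull c. v n w \<le> M + \<epsilon>)) sequentially"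
      using evc eventually_ge_at_top[of N1]
    proof eventually_elim
      case (elim n)
      have hs: "convex hull c \<subseteq> \<Omega>n n" using c(2) N1[OF elim(2)] by auto
      have "convex_on (\<Omega>n n) (v n)" using vW by (simp add: Wplus_def)
      hence "convex_on (convex hull c) (v n)" using hs convex_on_subset convex_convex_hull by blast
      moreover have "\<forall>w\<in>c. v n w \<le> M + \<epsilon>" using elim(1) by force
      ultimately show ?case using hs convex_on_convex_hull_bound by blast
    qed
    define q where "q = (\<lambda>n. SOME q. q \<in> \<Omega>n n \<and> dist q (y n) < inverse (real (Suc n)) \<and> v n q < \<beta> n + \<epsilon>)"
    have evq: "eventually (\<lambda>n. q n \<in> \<Omega>n n \<and> dist (q n) (y n) < inverse (real (Suc n)) \<and> v n (q n) < \<beta> n + \<epsilon>) sequentially"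
      using ev_y
    proof eventually_elim
      case (elim n)
      have "\<exists>q. q \<in> \<Omega>n n \<and> dist q (y n) < inverse (real (Suc n)) \<and> v n q < \<beta> n + \<epsilon>"
        using approx_border[of "\<Omega>n n" "y n" "v n" "inverse (real (Suc n))" \<epsilon>] elim \<Omega>n bfin \<epsilon> by auto
      thus ?case unfolding q_def by (rule someI_ex)
    qed
    have ql: "q \<longlonglongrightarrow> x"
    proof -
      have "(\<lambda>n. q n - y n) \<longlonglongrightarrow> 0"
      proof (rule Lim_null_comparison[OF _ LIMSEQ_inverse_real_of_nat])
        show "eventually (\<lambda>n. norm (q n - y n) \<le> inverse (real (Suc n))) sequentially"
          using evq by eventually_elim (auto simp: dist_norm)
      qed
      from tendsto_add[OF yl this] show ?thesis by simp
    qed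
    have key: "v0 ((1-t) *\<^sub>R z + t *\<^sub>R x) \<le> (1-t) * (M + \<epsilon>) + t * (bt x + \<epsilon>)"
      if t: "0 < t" "t < 1" for t
    proof -
      define p where "p = (1-t) *\<^sub>R z + t *\<^sub>R x"
      have "p \<in> open_segment z x" unfolding p_def in_segment using zx t by auto
      hence pO: "p \<in> \<Omega>" using in_interior_closure_convex_segment[OF \<Omega>(3) _ xcl] z \<Omega>(2)
        by (auto simp: interior_open)
      define zz where "zz = (\<lambda>n. (1/(1-t)) *\<^sub>R (p - t *\<^sub>R q n))"
      have "zz \<longlonglongrightarrow> (1/(1-t)) *\<^sub>R (p - t *\<^sub>R x)" unfolding zz_def
        by (intro tendsto_intros ql)
      moreover have "(1/(1-t)) *\<^sub>R (p - t *\<^sub>R x) = z"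
      proof -
        have "p - t *\<^sub>R x = (1-t) *\<^sub>R z" unfolding p_def by simp
        thus ?thesis using t by simp
      qed
      ultimately have zzl: "zz \<longlonglongrightarrow> z" by simp
      have evz: "eventually (\<lambda>n. dist (zz n) z < d) sequentially" using tendstoD[OF zzl c(3)] .
      have evp: "eventually (\<lambda>n. v n p \<le> (1-t) * (M + \<epsilon>) + t * (\<beta> n + \<epsilon>)) sequentially"
        using evz evh evq
      proof eventually_elim
        case (elim n)
        have zzh2: "zz n \<in> convex hull c" using elim c(4) by (auto simp: dist_commute)
        have zzh: "zz n \<in> \<Omega>n n" "zz n \<in> convex hull c" using elim zzh2 by blast+
        have "(1-t) *\<^sub>R zz n = p - t *\<^sub>R q n" using t unfolding zz_def by simp
        hence peq: "p = (1-t) *\<^sub>R zz n + t *\<^sub>R q n" by (simp add: algebra_simps)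
        have "convex_on (\<Omega>n n) (v n)" using vW by (simp add: Wplus_def)
        hence "v n p \<le> (1-t) * v n (zz n) + t * v n (q n)"
          unfolding peq using t zzh elim by (intro convex_onD) auto
        also have "\<dots> \<le> (1-t) * (M + \<epsilon>) + t * (\<beta> n + \<epsilon>)"
          using t elim zzh by (intro add_mono mult_left_mono) auto
        finally show ?case .
      qed
      have "(\<lambda>n. (1-t) * (M + \<epsilon>) + t * (\<beta> n + \<epsilon>)) \<longlonglongrightarrow> (1-t) * (M + \<epsilon>) + t * (bt x + \<epsilon>)"
        by (intro tendsto_intros \<beta>l)
      from tendsto_le[OF _ this conv[OF pO] evp] show ?thesis unfolding p_def by simp
    qed
    have "border v0 \<Omega> x \<le> ereal (bt x + 2 * \<epsilon>)"
    proof (rule liminf_upper)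
      fix r :: real assume r: "r > 0"
      define s where "s = min (1/2) (min (\<epsilon> / (\<bar>M - bt x\<bar> + 1)) (r / (dist z x + 1)))"
      have s0: "0 < s" using \<epsilon> r zero_le_dist[of z x] unfolding s_def
        by (auto intro!: divide_pos_pos simp del: zero_le_dist)
      have s1: "s < 1" unfolding s_def by auto
      have s2: "s * \<bar>M - bt x\<bar> \<le> \<epsilon>"
      proof -
        have "s \<le> \<epsilon> / (\<bar>M - bt x\<bar> + 1)" unfolding s_def by auto
        hence "s * (\<bar>M - bt x\<bar> + 1) \<le> \<epsilon>" by (simp add: field_simps)
        thus ?thesis using s0 by (simp add: algebra_simps)
      qed
      have s3: "s * dist z x < r"
      proof -
        have "s \<le> r / (dist z x + 1)" unfolding s_def by auto
        hence "s * (dist z x + 1) \<le> r" using pos_le_divide_eq[of "dist z x + 1" s r]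
          by (smt (verit) zero_le_dist)
        thus ?thesis using s0 by (simp add: algebra_simps)
      qed
      define p where "p = (1-(1-s)) *\<^sub>R z + (1-s) *\<^sub>R x"
      have "p \<in> open_segment z x" unfolding p_def in_segment using zx s0 s1 by (intro conjI exI[of _ "1-s"]) auto
      hence pO: "p \<in> \<Omega>" using in_interior_closure_convex_segment[OF \<Omega>(3) _ xcl] z \<Omega>(2)
        by (auto simp: interior_open)
      have "p - x = s *\<^sub>R (z - x)" unfolding p_def by (simp add: algebra_simps)
      hence dp: "dist p x = s * dist z x" using s0 by (simp add: dist_norm)
      have "v0 p \<le> (1-(1-s)) * (M + \<epsilon>) + (1-s) * (bt x + \<epsilon>)"
        unfolding p_def using key[of "1-s"] s0 s1 by simp
      also have "\<dots> = bt x + \<epsilon> + s * (M - bt x)" by (simp add: algebra_simps)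
      also have "\<dots> \<le> bt x + 2 * \<epsilon>" using s2 abs_ge_self[of "M - bt x"] s0
        by (smt (verit) mult_left_mono)
      finally show "\<exists>p\<in>\<Omega>. p \<noteq> x \<and> dist p x < r \<and> v0 p \<le> bt x + 2 * \<epsilon>"
        using pO xnot dp s3 by auto
    qed
    thus "border v0 \<Omega> x \<le> ereal (bt x) + ereal e'" unfolding \<epsilon>_def by simp
  qed
qed

end
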